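(* Consider the SRLOD model on a finite connected graph $G$ with $N\ge2$ agents, learning rate $\alpha\in(0,1)$, exploration rate $\epsilon\in(0,1)$, and Q-values in $[-1,1]$. Suppose that at some time $t_0\in\mathbb{N}$ there is an opinion $o\in\{-1,1\}$ with $q^i_o(t_0)>q^i_{-o}(t_0)$ for every agent $i\in\{1,\dots,N\}$. Then $$\mathbb{P}\big(q^i_o(t)>q^i_{-o}(t)\ \ \forall i\in\{1,\dots,N\},\ \forall t\ge t_0\big)=0,$$ i.e. consensus is almost surely eventually left.
   Context: The SRLOD (symmetric reinforcement learning for opinion dynamics) model: $G=(V,E)$ is a finite simple undirected graph with $V=\{1,\dots,N\}$. Each agent $i$ holds Q-values $q^i_1(t),q^i_{-1}(t)$, initialized in $[-1,1]$; agent $i$'s preferred opinion is the $o$ with $q^i_o(t)\ge q^i_{-o}(t)$ (opinion $1$ in case of a tie). In each discrete round $t$, an edge $(i,j)\in E$ is chosen uniformly at random; independently, each of $i$ and $j$ expresses an opinion $o_i(t),o_j(t)\in\{-1,1\}$, equal to its preferred opinion with probability $1-\epsilon$ and the other opinion with probability $\epsilon$; then both update only the Q-value of the opinion they expressed: $q^i_{o_i(t)}(t+1)=(1-\alpha)q^i_{o_i(t)}(t)+\alpha\,o_i(t)o_j(t)$ and $q^j_{o_j(t)}(t+1)=(1-\alpha)q^j_{o_j(t)}(t)+\alpha\,o_i(t)o_j(t)$. All other Q-values are unchanged. *)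

theory Defs
  imports "HOL-Probability.Probability"
begin

text \<open>Opinions are the integers -1 and 1.
A Q-state is a function q :: nat => int => real, where q i o is the Q-value of
agent i for opinion o.\<close>

definition simple_graph :: "nat \<Rightarrow> nat set set \<Rightarrow> bool" where
  "simple_graph N E \<longleftrightarrow> (\<forall>e\<in>E. e \<subseteq> {1..N} \<and> card e = 2)"

definition adj :: "nat set set \<Rightarrow> (nat \<times> nat) set" where
  "adj E = {(i, j). {i, j} \<in> E}"

definition connected_graph :: "nat \<Rightarrow> nat set set \<Rightarrow> bool" where
  "connected_graph N E \<longleftrightarrow> (\<forall>i\<in>{1..N}. \<forall>j\<in>{1..N}. (i, j) \<in> (adj E)\<^sup>*)"

text \<open>Preferred opinion: 1 in case of a tie.\<close>
definition pref :: "(nat \<Rightarrow> int \<Rightarrow> real) \<Rightarrow> nat \<Rightarrow> int" where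
  "pref q i = (if q i 1 \<ge> q i (-1) then 1 else -1)"

definition expressed :: "(nat \<Rightarrow> int \<Rightarrow> real) \<Rightarrow> nat \<Rightarrow> bool \<Rightarrow> int" where
  "expressed q i explore = (if explore then - pref q i else pref q i)"

text \<open>The randomness of one round: an edge chosen uniformly from E, and two independent
exploration coins (each True with probability eps) for the two endpoints
(the first coin belongs to the smaller endpoint, the second to the larger).\<close>
definition round_pmf :: "nat set set \<Rightarrow> real \<Rightarrow> (nat set \<times> bool \<times> bool) pmf" where
  "round_pmf E eps = pair_pmf (pmf_of_set E) (pair_pmf (bernoulli_pmf eps) (bernoulli_pmf eps))"

definition srlod_step :: "real \<Rightarrow> (nat \<Rightarrow> int \<Rightarrow> real) \<Rightarrow> nat set \<times> bool \<times> bool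
    \<Rightarrow> (nat \<Rightarrow> int \<Rightarrow> real)" where
  "srlod_step \<alpha> q r =
     (let e = fst r; i = Min e; j = Max e;
          oi = expressed q i (fst (snd r)); oj = expressed q j (snd (snd r));
          rew = real_of_int (oi * oj)
      in q(i := (q i)(oi := (1 - \<alpha>) * q i oi + \<alpha> * rew),
           j := (q j)(oj := (1 - \<alpha>) * q j oj + \<alpha> * rew)))"

primrec srlod_traj :: "real \<Rightarrow> (nat \<Rightarrow> int \<Rightarrow> real) \<Rightarrow> (nat set \<times> bool \<times> bool) stream
    \<Rightarrow> nat \<Rightarrow> (nat \<Rightarrow> int \<Rightarrow> real)" where
  "srlod_traj \<alpha> q0 \<omega> 0 = q0"
| "srlod_traj \<alpha> q0 \<omega> (Suc t) = srlod_step \<alpha> (srlod_traj \<alpha> q0 \<omega> t) (\<omega> !! t)"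

definition srlod_space :: "nat set set \<Rightarrow> real \<Rightarrow> (nat set \<times> bool \<times> bool) stream measure" where
  "srlod_space E eps = stream_space (measure_pmf (round_pmf E eps))"

end

theory Submission
  imports Defs
begin

definition consn :: "nat \<Rightarrow> int \<Rightarrow> (nat \<Rightarrow> int \<Rightarrow> real) \<Rightarrow> bool" where
  "consn N opn q \<longleftrightarrow> (\<forall>i\<in>{1..N}. q i (- opn) < q i opn)"

definition bnd :: "nat \<Rightarrow> (nat \<Rightarrow> int \<Rightarrow> real) \<Rightarrow> bool" where
  "bnd N q \<longleftrightarrow> (\<forall>i\<in>{1..N}. \<forall>p\<in>{-1, 1::int}. q i p \<in> {-1..1})"

definition code :: "nat set \<times> bool \<times> bool \<Rightarrow> nat \<times> nat \<times> bool \<times> bool" where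
  "code r = (Min (fst r), Max (fst r), fst (snd r), snd (snd r))"

lemma step_code: "code r = code r' \<Longrightarrow> srlod_step \<alpha> q r = srlod_step \<alpha> q r'"
  unfolding code_def srlod_step_def Let_def by simp

lemma traj_front: "srlod_traj \<alpha> q (x ## \<omega>) (Suc t) = srlod_traj \<alpha> (srlod_step \<alpha> q x) \<omega> t"
  by (induction t) auto

lemma expressed_pm: "expressed q i b \<in> {-1, 1}"
  unfolding expressed_def pref_def by auto

lemma bnd_step:
  assumes "bnd N q" "0 < \<alpha>" "\<alpha> < 1"
  shows "bnd N (srlod_step \<alpha> q r)"
proof -
  have cvx: "(1 - \<alpha>) * x + \<alpha> * w \<in> {-1..1}" if "x \<in> {-1..1}" "w \<in> {-1, 1}" for x w :: real
  proof -
    have "(1 - \<alpha>) * (x + 1) \<ge> 0" "(1 - \<alpha>) * (1 - x) \<ge> 0"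
      using that assms by auto
    then show ?thesis using that assms by (auto simp: algebra_simps)
  qed
  define i where "i = Min (fst r)"
  define j where "j = Max (fst r)"
  define oi where "oi = expressed q i (fst (snd r))"
  define oj where "oj = expressed q j (snd (snd r))"
  have oi: "oi \<in> {-1,1}" and oj: "oj \<in> {-1,1}" unfolding oi_def oj_def by (rule expressed_pm)+
  have rew: "real_of_int (oi * oj) \<in> {-1, 1}" using oi oj by auto
  have eq: "srlod_step \<alpha> q r = q(i := (q i)(oi := (1 - \<alpha>) * q i oi + \<alpha> * real_of_int (oi * oj)),
           j := (q j)(oj := (1 - \<alpha>) * q j oj + \<alpha> * real_of_int (oi * oj)))"
    unfolding srlod_step_def Let_def i_def j_def oi_def oj_def by simp
  show ?thesis
    unfolding bnd_def eq
  proof (intro ballI)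
    fix k p assume k: "k \<in> {1..N}" and p: "p \<in> {-1, 1::int}"
    have qk: "\<And>p. p \<in> {-1,1::int} \<Longrightarrow> q k p \<in> {-1..1}" using assms(1) k unfolding bnd_def by auto
    show "(q(i := (q i)(oi := (1 - \<alpha>) * q i oi + \<alpha> * real_of_int (oi * oj)),
           j := (q j)(oj := (1 - \<alpha>) * q j oj + \<alpha> * real_of_int (oi * oj)))) k p \<in> {-1..1}"
      using qk[OF p] qk[OF oi] qk[OF oj] cvx rew by auto
  qed
qed

lemma traj_front': "srlod_traj \<alpha> q \<omega> (Suc t) = srlod_traj \<alpha> (srlod_step \<alpha> q (shd \<omega>)) (stl \<omega>) t"
  using traj_front[of \<alpha> q "shd \<omega>" "stl \<omega>" t] by simp

lemma meas_traj:
  fixes R :: "(nat set \<times> bool \<times> bool) pmf"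
  shows "{\<omega> \<in> space (stream_space (measure_pmf R)). P (srlod_traj \<alpha> q \<omega> t)} \<in> sets (stream_space (measure_pmf R))"
proof (induction t arbitrary: P q)
  case 0
  show ?case by (cases "P q") auto
next
  case (Suc t)
  let ?S = "stream_space (measure_pmf R)"
  let ?A = "\<lambda>c::nat \<times> nat \<times> bool \<times> bool. (shd -` {r. code r = c} \<inter> space ?S) \<inter>
       (stl -` {\<omega> \<in> space ?S. P (srlod_traj \<alpha> (srlod_step \<alpha> q (inv code c)) \<omega> t)} \<inter> space ?S)"
  have eq: "{\<omega> \<in> space ?S. P (srlod_traj \<alpha> q \<omega> (Suc t))} = (\<Union>c\<in>UNIV. ?A c)"
  proof (intro equalityI subsetI)
    fix \<omega> assume "\<omega> \<in> {\<omega> \<in> space ?S. P (srlod_traj \<alpha> q \<omega> (Suc t))}"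
    then have "\<omega> \<in> ?A (code (shd \<omega>))"
      using step_code[of "inv code (code (shd \<omega>))" "shd \<omega>" \<alpha> q]
      by (auto simp: traj_front' f_inv_into_f space_stream_space simp del: srlod_traj.simps(2))
    then show "\<omega> \<in> (\<Union>c\<in>UNIV. ?A c)" by blast
  next
    fix \<omega> assume "\<omega> \<in> (\<Union>c\<in>UNIV. ?A c)"
    then obtain c where "\<omega> \<in> ?A c" by blast
    then show "\<omega> \<in> {\<omega> \<in> space ?S. P (srlod_traj \<alpha> q \<omega> (Suc t))}"
      using step_code[of "inv code (code (shd \<omega>))" "shd \<omega>" \<alpha> q]
      by (auto simp: traj_front' f_inv_into_f space_stream_space simp del: srlod_traj.simps(2))
  qed
  have "?A c \<in> sets ?S" for c
    by (intro sets.Int measurable_sets[OF measurable_shd] measurable_sets[OF measurable_stl] Suc) auto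
  then show ?case unfolding eq by (intro sets.countable_UN) auto
qed


lemma meas_T:
  fixes R :: "(nat set \<times> bool \<times> bool) pmf"
  shows "{\<omega> \<in> space (stream_space (measure_pmf R)). \<forall>t\<ge>m. P (srlod_traj \<alpha> q \<omega> t)} \<in> sets (stream_space (measure_pmf R))"
proof -
  have [measurable]: "\<And>t. Measurable.pred (stream_space (measure_pmf R)) (\<lambda>\<omega>. P (srlod_traj \<alpha> q \<omega> t))"
    unfolding pred_def by (rule meas_traj)
  show ?thesis by measurable
qed

lemma all_split_nat: "(\<forall>t::nat. P t) \<longleftrightarrow> P 0 \<and> (\<forall>t. P (Suc t))"
  by (metis not0_implies_Suc)

lemma all_ge_Suc: "(\<forall>t\<ge>Suc m. P t) \<longleftrightarrow> (\<forall>t\<ge>m. P (Suc t))"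
  by (metis Suc_le_D Suc_le_mono)

lemma G_decomp:
  fixes R :: "(nat set \<times> bool \<times> bool) pmf"
  shows "emeasure (stream_space (measure_pmf R)) {\<omega> \<in> space (stream_space (measure_pmf R)). \<forall>t. P (srlod_traj \<alpha> q \<omega> t)}
    = (if P q then \<integral>\<^sup>+x. emeasure (stream_space (measure_pmf R))
         {\<omega> \<in> space (stream_space (measure_pmf R)). \<forall>t. P (srlod_traj \<alpha> (srlod_step \<alpha> q x) \<omega> t)} \<partial>measure_pmf R else 0)"
proof -
  let ?S = "stream_space (measure_pmf R)"
  have m: "{\<omega> \<in> space ?S. \<forall>t. P (srlod_traj \<alpha> q \<omega> t)} \<in> sets ?S"
    using meas_T[of R 0 P \<alpha> q] by simp
  have eq: "{X \<in> space ?S. x ## X \<in> {\<omega> \<in> space ?S. \<forall>t. P (srlod_traj \<alpha> q \<omega> t)}}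
     = (if P q then {\<omega> \<in> space ?S. \<forall>t. P (srlod_traj \<alpha> (srlod_step \<alpha> q x) \<omega> t)} else {})" for x
    by (subst all_split_nat) (auto simp: traj_front space_stream_space simp del: srlod_traj.simps(2))
  show ?thesis
    apply (subst prob_space.emeasure_stream_space[OF measure_pmf.prob_space_axioms m]) apply (simp only: eq) by (simp add: )
qed

lemma T_zero:
  fixes R :: "(nat set \<times> bool \<times> bool) pmf"
  assumes G0: "\<And>q. B q \<Longrightarrow> emeasure (stream_space (measure_pmf R)) {\<omega> \<in> space (stream_space (measure_pmf R)). \<forall>t. P (srlod_traj \<alpha> q \<omega> t)} = 0"
    and Bstep: "\<And>q x. B q \<Longrightarrow> B (srlod_step \<alpha> q x)"
    and "B q"
  shows "emeasure (stream_space (measure_pmf R)) {\<omega> \<in> space (stream_space (measure_pmf R)). \<forall>t\<ge>m. P (srlod_traj \<alpha> q \<omega> t)} = 0"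
  using \<open>B q\<close>
proof (induction m arbitrary: q)
  case 0
  then show ?case using G0 by simp
next
  case (Suc m)
  let ?S = "stream_space (measure_pmf R)"
  have eq: "{X \<in> space ?S. x ## X \<in> {\<omega> \<in> space ?S. \<forall>t\<ge>Suc m. P (srlod_traj \<alpha> q \<omega> t)}}
     = {\<omega> \<in> space ?S. \<forall>t\<ge>m. P (srlod_traj \<alpha> (srlod_step \<alpha> q x) \<omega> t)}" for x
    by (subst all_ge_Suc) (auto simp: traj_front space_stream_space simp del: srlod_traj.simps(2))
  show ?case
    apply (subst prob_space.emeasure_stream_space[OF measure_pmf.prob_space_axioms meas_T]) apply (simp only: eq) by (simp add:  Suc Bstep)
qed

lemma prod_pmf_bounds: "0 \<le> prod_list (map (pmf R) rs) \<and> prod_list (map (pmf R) rs) \<le> 1"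
  by (induction rs) (auto intro: mult_le_one pmf_le_1)

lemma lemX:
  fixes R :: "(nat set \<times> bool \<times> bool) pmf" and c :: real
  assumes c: "0 \<le> c"
    and cb: "\<And>q'. B q' \<Longrightarrow> emeasure (stream_space (measure_pmf R))
        {\<omega> \<in> space (stream_space (measure_pmf R)). \<forall>t. P (srlod_traj \<alpha> q' \<omega> t)} \<le> ennreal c"
    and Bstep: "\<And>q x. B q \<Longrightarrow> B (srlod_step \<alpha> q x)"
    and "B q"
    and "\<not> (\<forall>k\<le>length rs. P (foldl (srlod_step \<alpha>) q (take k rs)))"
  shows "emeasure (stream_space (measure_pmf R))
        {\<omega> \<in> space (stream_space (measure_pmf R)). \<forall>t. P (srlod_traj \<alpha> q \<omega> t)}
      \<le> ennreal ((1 - prod_list (map (pmf R) rs)) * c)"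
  using assms(4,5)
proof (induction rs arbitrary: q)
  case Nil
  then show ?case by (subst G_decomp) simp
next
  case (Cons r rs)
  let ?S = "stream_space (measure_pmf R)"
  let ?G = "\<lambda>q. emeasure ?S {\<omega> \<in> space ?S. \<forall>t. P (srlod_traj \<alpha> q \<omega> t)}"
  let ?M = "measure_pmf R"
  show ?case
  proof (cases "P q")
    case False
    then show ?thesis by (subst G_decomp) simp
  next
    case True
    have h: "\<not> (\<forall>k\<le>length rs. P (foldl (srlod_step \<alpha>) (srlod_step \<alpha> q r) (take k rs)))"
    proof
      assume a: "\<forall>k\<le>length rs. P (foldl (srlod_step \<alpha>) (srlod_step \<alpha> q r) (take k rs))"
      have "\<forall>k\<le>length (r # rs). P (foldl (srlod_step \<alpha>) q (take k (r # rs)))"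
      proof (intro allI impI)
        fix k assume "k \<le> length (r # rs)"
        then show "P (foldl (srlod_step \<alpha>) q (take k (r # rs)))"
          using a True by (cases k) auto
      qed
      then show False using Cons.prems(2) by blast
    qed
    define P' where "P' = prod_list (map (pmf R) rs)"
    have P': "0 \<le> P'" "P' \<le> 1" unfolding P'_def using prod_pmf_bounds by auto
    define a where "a = (1 - P') * c"
    have a: "0 \<le> a" unfolding a_def using P' c by auto
    have IH: "?G (srlod_step \<alpha> q r) \<le> ennreal a"
      unfolding a_def P'_def using Cons.IH[OF Bstep[OF Cons.prems(1)] h] .
    have pr: "0 \<le> pmf R r" "pmf R r \<le> 1" by (auto simp: pmf_le_1)
    have "?G q = (\<integral>\<^sup>+x. ?G (srlod_step \<alpha> q x) \<partial>?M)"
      by (subst G_decomp) (simp add: True)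
    also have "\<dots> \<le> (\<integral>\<^sup>+x. ennreal a * indicator {r} x + ennreal c * indicator (UNIV - {r}) x \<partial>?M)"
    proof (rule nn_integral_mono)
      fix x
      show "?G (srlod_step \<alpha> q x) \<le> ennreal a * indicator {r} x + ennreal c * indicator (UNIV - {r}) x"
        using IH cb[OF Bstep[OF Cons.prems(1)]] by (cases "x = r") auto
    qed
    also have "\<dots> = ennreal a * emeasure ?M {r} + ennreal c * emeasure ?M (UNIV - {r})"
      by (subst nn_integral_add) (auto simp: nn_integral_cmult_indicator)
    also have "\<dots> = ennreal a * ennreal (pmf R r) + ennreal c * ennreal (1 - pmf R r)"
    proof -
      have "emeasure ?M (UNIV - {r}) = ennreal (1 - pmf R r)"
        using measure_pmf.prob_compl[of "{r}" R]
        by (simp add: measure_pmf.emeasure_eq_measure measure_pmf_single)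
      then show ?thesis by (simp add: emeasure_pmf_single)
    qed
    also have "\<dots> = ennreal (a * pmf R r + c * (1 - pmf R r))"
      using a c pr by (simp add: ennreal_mult ennreal_plus)
    also have "a * pmf R r + c * (1 - pmf R r) = (1 - prod_list (map (pmf R) (r # rs))) * c"
      unfolding a_def P'_def by (simp add: algebra_simps)
    finally show ?thesis .
  qed
qed

lemma G_zero:
  fixes R :: "(nat set \<times> bool \<times> bool) pmf"
  assumes Bstep: "\<And>q x. B q \<Longrightarrow> B (srlod_step \<alpha> q x)"
    and pat: "\<And>q. B q \<Longrightarrow> \<not> (\<forall>k\<le>length rs. P (foldl (srlod_step \<alpha>) q (take k rs)))"
    and ppos: "0 < prod_list (map (pmf R) rs)"
    and "B q"
  shows "emeasure (stream_space (measure_pmf R))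
        {\<omega> \<in> space (stream_space (measure_pmf R)). \<forall>t. P (srlod_traj \<alpha> q \<omega> t)} = 0"
proof -
  let ?S = "stream_space (measure_pmf R)"
  let ?G = "\<lambda>q. emeasure ?S {\<omega> \<in> space ?S. \<forall>t. P (srlod_traj \<alpha> q \<omega> t)}"
  define p where "p = prod_list (map (pmf R) rs)"
  have p: "0 < p" "p \<le> 1" using ppos prod_pmf_bounds unfolding p_def by auto
  interpret S: prob_space ?S by (rule prob_space.prob_space_stream_space[OF measure_pmf.prob_space_axioms])
  have bound: "\<forall>q. B q \<longrightarrow> ?G q \<le> ennreal ((1 - p) ^ n)" for n
  proof (induction n)
    case 0
    then show ?case using S.emeasure_le_1 by simp
  next
    case (Suc n)
    show ?case
    proof (intro allI impI)
      fix q assume "B q"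
      have "?G q \<le> ennreal ((1 - prod_list (map (pmf R) rs)) * (1 - p) ^ n)"
        by (rule lemX[OF _ _ Bstep \<open>B q\<close> pat[OF \<open>B q\<close>]]) (use Suc p in auto)
      then show "?G q \<le> ennreal ((1 - p) ^ Suc n)" by (simp add: p_def[symmetric])
    qed
  qed
  let ?m = "measure ?S {\<omega> \<in> space ?S. \<forall>t. P (srlod_traj \<alpha> q \<omega> t)}"
  have "?m \<le> (1 - p) ^ n" for n
    using bound[of n] \<open>B q\<close> p by (simp add: S.emeasure_eq_measure)
  moreover have "(\<lambda>n. (1 - p) ^ n) \<longlonglongrightarrow> 0"
    using p by (intro LIMSEQ_power_zero) auto
  ultimately have "?m \<le> 0" by (intro LIMSEQ_le_const) auto
  then have "?m = 0" by (simp add: antisym)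
  then show ?thesis by (simp add: S.emeasure_eq_measure)
qed

lemma pref_cons: "opn \<in> {-1, 1} \<Longrightarrow> q i (- opn) < q i opn \<Longrightarrow> pref q i = opn"
  unfolding pref_def by auto

lemma step_j:
  assumes "Min e \<noteq> Max e"
  shows "srlod_step \<alpha> q (e, b1, b2) (Max e) x =
    (if x = expressed q (Max e) b2
     then (1 - \<alpha>) * q (Max e) x + \<alpha> * real_of_int (expressed q (Min e) b1 * expressed q (Max e) b2)
     else q (Max e) x)"
  using assms unfolding srlod_step_def Let_def by auto

lemma foldl_replicate_Suc: "foldl f a (replicate (Suc k) x) = f (foldl f a (replicate k x)) x"
  by (induction k arbitrary: a) auto

lemma core:
  fixes q :: "nat \<Rightarrow> int \<Rightarrow> real"
  assumes al: "0 < \<alpha>" "\<alpha> < 1" and opn: "opn \<in> {-1, 1}"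
    and ij: "Min e < Max e" "Min e \<in> {1..N}" "Max e \<in> {1..N}"
    and b: "bnd N q" and K: "(1 - \<alpha>) ^ K \<le> \<alpha>"
  shows "\<not> (\<forall>k\<le>length ((e, True, True) # replicate K (e, True, False)).
            consn N opn (foldl (srlod_step \<alpha>) q (take k ((e, True, True) # replicate K (e, True, False)))))"
proof
  let ?pat = "(e, True, True) # replicate K (e, True, False)"
  define i where "i = Min e"
  define j where "j = Max e"
  have ij': "i \<noteq> j" "i \<in> {1..N}" "j \<in> {1..N}" using ij unfolding i_def j_def by auto
  assume H: "\<forall>k\<le>length ?pat. consn N opn (foldl (srlod_step \<alpha>) q (take k ?pat))"
  have oo: "real_of_int (opn * opn) = 1" "opn \<noteq> - opn" using opn by auto
  have c0: "consn N opn q" using H[rule_format, of 0] by simp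
  define q1 where "q1 = srlod_step \<alpha> q (e, True, True)"
  define Q where "Q k = foldl (srlod_step \<alpha>) q1 (replicate k (e, True, False))" for k
  have cQ: "consn N opn (Q k)" if "k \<le> K" for k
    using H[rule_format, of "Suc k"] that by (simp add: Q_def q1_def take_replicate min_def)
  have pq: "pref q i = opn" "pref q j = opn"
    using c0 ij' opn unfolding consn_def by (auto intro: pref_cons)
  have q1a: "q1 j (- opn) = (1 - \<alpha>) * q j (- opn) + \<alpha>"
    unfolding q1_def j_def using step_j[of e \<alpha> q True True "- opn"] ij pq oo
    by (simp add: expressed_def i_def j_def)
  have q1b: "q1 j opn = q j opn"
    unfolding q1_def j_def using step_j[of e \<alpha> q True True opn] ij pq oo
    by (simp add: expressed_def i_def j_def)
  have claim: "k \<le> K \<longrightarrow> Q k j opn = -1 + (1 - \<alpha>) ^ k * (q j opn + 1) \<and> Q k j (- opn) = q1 j (- opn)" for k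
  proof (induction k)
    case 0
    then show ?case by (simp add: Q_def q1b)
  next
    case (Suc k)
    show ?case
    proof
      assume "Suc k \<le> K"
      then have kK: "k \<le> K" by simp
      have IH: "Q k j opn = -1 + (1 - \<alpha>) ^ k * (q j opn + 1)" "Q k j (- opn) = q1 j (- opn)"
        using Suc.IH kK by auto
      have pQ: "pref (Q k) i = opn" "pref (Q k) j = opn"
        using cQ[OF kK] ij' opn unfolding consn_def by (auto intro: pref_cons)
      have QS: "Q (Suc k) = srlod_step \<alpha> (Q k) (e, True, False)"
        unfolding Q_def by (simp only: foldl_replicate_Suc)
      have m1: "real_of_int (- opn * opn) = -1" using opn by auto
      have a1: "Q (Suc k) j opn = (1 - \<alpha>) * Q k j opn - \<alpha>"
        unfolding QS j_def using step_j[of e \<alpha> "Q k" True False opn] ij pQ m1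
        by (simp add: expressed_def i_def j_def)
      have a2: "Q (Suc k) j (- opn) = Q k j (- opn)"
        unfolding QS j_def using step_j[of e \<alpha> "Q k" True False "- opn"] ij pQ oo
        by (simp add: expressed_def i_def j_def)
      show "Q (Suc k) j opn = -1 + (1 - \<alpha>) ^ Suc k * (q j opn + 1) \<and> Q (Suc k) j (- opn) = q1 j (- opn)"
        using a1 a2 IH by (simp add: algebra_simps)
    qed
  qed
  have fin: "Q K j (- opn) < Q K j opn" using cQ[of K] ij' unfolding consn_def by auto
  have bj: "q j opn \<in> {-1..1}" "q j (- opn) \<in> {-1..1}" using b ij' opn unfolding bnd_def by auto
  have "(1 - \<alpha>) ^ K * (q j opn + 1) \<le> \<alpha> * 2"
    using K bj al by (intro mult_mono) auto
  moreover have "(1 - \<alpha>) * (q j (- opn) + 1) \<ge> 0" using bj al by auto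
  ultimately show False using fin claim[of K] q1a by (auto simp: algebra_simps)
qed

theorem lemma3:
  fixes N :: nat and E :: "nat set set" and \<alpha> \<epsilon> :: real
    and q0 :: "nat \<Rightarrow> int \<Rightarrow> real" and t0 :: nat and opn :: int
  assumes "N \<ge> 2"
    and "simple_graph N E" and "connected_graph N E"
    and "0 < \<alpha>" and "\<alpha> < 1" and "0 < \<epsilon>" and "\<epsilon> < 1"
    and "\<forall>i\<in>{1..N}. \<forall>p\<in>{-1, 1::int}. q0 i p \<in> {-1..1}"
    and "opn \<in> {-1, 1}"
  shows "{\<omega> \<in> space (srlod_space E \<epsilon>).
            (\<forall>i\<in>{1..N}. srlod_traj \<alpha> q0 \<omega> t0 i opn > srlod_traj \<alpha> q0 \<omega> t0 i (- opn)) \<and>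
            (\<forall>t\<ge>t0. \<forall>i\<in>{1..N}. srlod_traj \<alpha> q0 \<omega> t i opn > srlod_traj \<alpha> q0 \<omega> t i (- opn))}
           \<in> sets (srlod_space E \<epsilon>)
      \<and> measure (srlod_space E \<epsilon>)
          {\<omega> \<in> space (srlod_space E \<epsilon>).
            (\<forall>i\<in>{1..N}. srlod_traj \<alpha> q0 \<omega> t0 i opn > srlod_traj \<alpha> q0 \<omega> t0 i (- opn)) \<and>
            (\<forall>t\<ge>t0. \<forall>i\<in>{1..N}. srlod_traj \<alpha> q0 \<omega> t i opn > srlod_traj \<alpha> q0 \<omega> t i (- opn))} = 0"
proof -
  let ?R = "round_pmf E \<epsilon>"
  let ?S = "stream_space (measure_pmf ?R)"
  have srl: "srlod_space E \<epsilon> = ?S" unfolding srlod_space_def ..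
  have "(1, 2) \<in> (adj E)\<^sup>*" using assms(1,3) unfolding connected_graph_def by auto
  then obtain y where "(1, y) \<in> adj E"
    by (cases rule: converse_rtranclE) auto
  then have eE: "{1, y} \<in> E" unfolding adj_def by auto
  define e where "e = {1, y}"
  have "card e = 2" "e \<subseteq> {1..N}" using eE assms(2) unfolding simple_graph_def e_def by auto
  then obtain a b where ab: "e = {a, b}" "a \<noteq> b" by (auto simp: card_2_iff)
  have eMM: "Min e < Max e" "Min e \<in> {1..N}" "Max e \<in> {1..N}"
    using ab \<open>e \<subseteq> {1..N}\<close> by (auto simp: min_def max_def)
  have finE: "finite E"
    by (rule finite_subset[of E "Pow {1..N}"]) (use assms(2) in \<open>auto simp: simple_graph_def\<close>)
  have Ene: "E \<noteq> {}" using eE by auto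
  obtain K where K: "(1 - \<alpha>) ^ K < \<alpha>" using real_arch_pow_inv[of \<alpha> "1 - \<alpha>"] assms(4,5) by auto
  define pat where "pat = (e, True, True) # replicate K (e, True, False)"
  have setR: "set_pmf ?R = E \<times> UNIV \<times> UNIV"
    unfolding round_pmf_def using finE Ene assms(6,7) by (simp add: set_pmf_of_set)
  have pos: "0 < pmf ?R r" if "fst r \<in> E" for r
    using that setR by (cases r) (auto simp: pmf_positive_iff)
  have ppos: "0 < prod_list (map (pmf ?R) pat)"
    unfolding pat_def using pos[of "(e, True, True)"] pos[of "(e, True, False)"] eE e_def
    by (simp add: prod_list_replicate)
  have Bstep: "\<And>q x. bnd N q \<Longrightarrow> bnd N (srlod_step \<alpha> q x)"
    using bnd_step assms(4,5) by blast
  have patH: "\<And>q. bnd N q \<Longrightarrow> \<not> (\<forall>k\<le>length pat. consn N opn (foldl (srlod_step \<alpha>) q (take k pat)))"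
    unfolding pat_def by (rule core[OF assms(4,5,9) eMM _ less_imp_le[OF K]])
  have G0: "\<And>q. bnd N q \<Longrightarrow> emeasure ?S {\<omega> \<in> space ?S. \<forall>t. consn N opn (srlod_traj \<alpha> q \<omega> t)} = 0"
    by (rule G_zero[where B="bnd N" and P="consn N opn", OF Bstep patH ppos])
  have bq0: "bnd N q0" using assms(8) unfolding bnd_def by auto
  have T0: "emeasure ?S {\<omega> \<in> space ?S. \<forall>t\<ge>t0. consn N opn (srlod_traj \<alpha> q0 \<omega> t)} = 0"
    by (rule T_zero[where B="bnd N" and P="consn N opn", OF G0 Bstep bq0])
  let ?X = "{\<omega> \<in> space ?S.
            (\<forall>i\<in>{1..N}. srlod_traj \<alpha> q0 \<omega> t0 i opn > srlod_traj \<alpha> q0 \<omega> t0 i (- opn)) \<and>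
            (\<forall>t\<ge>t0. \<forall>i\<in>{1..N}. srlod_traj \<alpha> q0 \<omega> t i opn > srlod_traj \<alpha> q0 \<omega> t i (- opn))}"
  have Xeq: "?X = {\<omega> \<in> space ?S. consn N opn (srlod_traj \<alpha> q0 \<omega> t0)} \<inter>
                  {\<omega> \<in> space ?S. \<forall>t\<ge>t0. consn N opn (srlod_traj \<alpha> q0 \<omega> t)}"
    unfolding consn_def by auto
  have Xm: "?X \<in> sets ?S" unfolding Xeq by (intro sets.Int meas_traj meas_T)
  have "emeasure ?S ?X \<le> emeasure ?S {\<omega> \<in> space ?S. \<forall>t\<ge>t0. consn N opn (srlod_traj \<alpha> q0 \<omega> t)}"
    unfolding Xeq by (rule emeasure_mono[OF Int_lower2 meas_T])
  then have "emeasure ?S ?X = 0" using T0 by simp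
  then have "measure ?S ?X = 0" by (simp add: measure_def)
  then show ?thesis using Xm unfolding srl by simp
qed

end
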